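(* Let $d\geq 2$ and let $n\geq d^{6d\log d}$ be an integer. Then for every lower set $Q\subset\mathbb{Z}_+^d$ with $|Q|=n$, $$|M(Q)|\leq \prod_{k=1}^{d-1}\Big(1+\frac{1}{k^2}\Big)\,n^{1-\frac{1}{d}}<\frac{\sinh\pi}{\pi}\,n^{1-\frac{1}{d}}.$$
   Context: $\mathbb{Z}_+=\{0,1,2,\dots\}$. A set $Q\subset\mathbb{Z}_+^d$ is a lower set if whenever $q\in Q$ and $q'\in\mathbb{Z}_+^d$ satisfies $q'_i\leq q_i$ for all $i$, then $q'\in Q$. For $q,q'\in\mathbb{Z}_+^d$ write $q\succ q'$ if $q_i\geq q'_i$ for all $i=1,\dots,d$. A subset $Q'$ of a lower set $Q$ is called available if for every $q'\in Q'$ there is no $q\in Q\setminus\{q'\}$ with $q\succ q'$. $M(Q)$ denotes the maximal available subset of $Q$, i.e. the set of all $q'\in Q$ such that no $q\in Q\setminus\{q'\}$ satisfies $q\succ q'$. $\log$ is the natural logarithm. *)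

theory Defs
  imports "HOL-Analysis.Analysis"
begin

text \<open>Points of Z_+^d are represented as lists of naturals of length d.\<close>

definition pts :: "nat \<Rightarrow> nat list set" where
  "pts d = {q. length q = d}"

definition dom :: "nat list \<Rightarrow> nat list \<Rightarrow> bool" where
  "dom q q' \<longleftrightarrow> length q = length q' \<and> (\<forall>i<length q. q' ! i \<le> q ! i)"

definition lower_set :: "nat \<Rightarrow> nat list set \<Rightarrow> bool" where
  "lower_set d Q \<longleftrightarrow> Q \<subseteq> pts d \<and> (\<forall>q\<in>Q. \<forall>q'\<in>pts d. dom q q' \<longrightarrow> q' \<in> Q)"

definition Mset :: "nat list set \<Rightarrow> nat list set" where
  "Mset Q = {q'\<in>Q. \<not> (\<exists>q\<in>Q - {q'}. dom q q')}"

end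

theory Submission
  imports Defs
begin


lemma sinh_of_real_c: "sinh (complex_of_real x) = complex_of_real (sinh x)"
  by (simp add: sinh_def scaleR_conv_of_real flip: exp_of_real)

lemma prod_lim: "(\<lambda>n. \<Prod>k=1..n. 1 + 1 / (real k)^2) \<longlonglongrightarrow> sinh pi / pi"
proof -
  have "(\<lambda>n. (\<Prod>k=1..n. 1 - \<i>^2 / of_nat k^2)) \<longlonglongrightarrow> sin (of_real pi * \<i>) / (of_real pi * \<i>)"
    using tendsto_divide[OF sin_product_formula_complex[of "\<i>"] tendsto_const[of "of_real pi * \<i>"]]
    by simp
  also have "(\<lambda>n. (\<Prod>k=1..n. 1 - \<i>^2 / of_nat k^2)) = (\<lambda>n. of_real (\<Prod>k=1..n. 1 + 1 / (real k)^2))"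
    by (simp add: of_real_prod)
  also have "sin (of_real pi * \<i>) / (of_real pi * \<i>) = of_real (sinh pi / pi)"
  proof -
    have "sinh (of_real pi :: complex) = -\<i> * sin (\<i> * of_real pi)" by (rule sinh_conv_sin)
    hence "sin (\<i> * of_real pi) = \<i> * sinh (of_real pi :: complex)" by (simp add: field_simps)
    thus ?thesis by (simp add: mult.commute sinh_of_real_c field_simps)
  qed
  finally show ?thesis by (simp only: tendsto_of_real_iff)
qed

lemma prod_lt: "(\<Prod>k=1..n. 1 + 1 / (real k)^2) < sinh pi / pi"
proof -
  let ?P = "\<lambda>n. \<Prod>k=1..n. 1 + 1 / (real k)^2"
  have step: "?P (Suc n) = ?P n * (1 + 1 / (real (Suc n))^2)" for n
    by (simp add: prod.nat_ivl_Suc')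
  have pos: "?P n > 0" for n by (intro prod_pos) (auto simp: add_pos_nonneg)
  have inc: "incseq ?P"
  proof (rule incseq_SucI)
    fix n show "?P n \<le> ?P (Suc n)" using pos[of n] by (simp add: step)
  qed
  have "?P n < ?P (Suc n)" using pos[of n] by (simp add: step)
  also have "\<dots> \<le> sinh pi / pi" by (rule incseq_le[OF inc prod_lim])
  finally show ?thesis .
qed


lemma key_ineq:
  fixes s y b :: real
  assumes "b > 0" "s \<ge> 0" "y \<ge> 0"
  shows "(s + y) powr (1 + b) \<le> s powr (1 + b) + (1 + b) * (s + y) powr b * y"
proof (cases "s = 0")
  case True
  have "(s + y) powr (1 + b) = (s+y) powr b * y" using True assms
    by (cases "y = 0") (auto simp: powr_add)
  also have "\<dots> \<le> (1 + b) * (s + y) powr b * y"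
  proof -
    have "0 \<le> (s+y) powr b * y" using assms by simp
    thus ?thesis using assms by (simp add: algebra_simps)
  qed
  finally show ?thesis using True by simp
next
  case False
  hence s: "s > 0" using assms by simp
  show ?thesis
  proof (cases "y = 0")
    case True thus ?thesis by simp
  next
    case False
    hence lt: "s < s + y" using assms by simp
    have "\<And>x. s \<le> x \<Longrightarrow> x \<le> s + y \<Longrightarrow> DERIV (\<lambda>x. x powr (1 + b)) x :> (1 + b) * x powr b"
    proof -
      fix x assume "s \<le> x" "x \<le> s + y"
      hence "x > 0" using s by simp
      thus "DERIV (\<lambda>x. x powr (1 + b)) x :> (1 + b) * x powr b"
        using DERIV_powr[of "\<lambda>x. x" 1 x "\<lambda>_. 1 + b" 0]
        by (auto intro!: derivative_eq_intros simp: powr_diff field_simps)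
    qed
    from MVT2[OF lt this] obtain z where z: "s < z" "z < s + y"
      "(s + y) powr (1 + b) - s powr (1 + b) = (s + y - s) * ((1 + b) * z powr b)" by blast
    have "z powr b \<le> (s + y) powr b" using z s assms by (intro powr_mono2) auto
    hence "(s + y - s) * ((1 + b) * z powr b) \<le> (1 + b) * (s + y) powr b * y"
      using assms by (simp add: mult_left_mono mult.commute mult.left_commute)
    thus ?thesis using z(3) by simp
  qed
qed

lemma tail_ineq:
  fixes b :: real and h :: nat and y :: "nat \<Rightarrow> real"
  assumes "b > 0"
  shows "(\<forall>j<h. y j \<ge> 0) \<Longrightarrow> (\<Sum>j<h. y j) powr (1 + b) \<le> (1 + b) * (\<Sum>j<h. (\<Sum>i=j..<h. y i) powr b * y j)"
proof (induction h arbitrary: y)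
  case 0 thus ?case by simp
next
  case (Suc h)
  let ?z = "\<lambda>i. y (Suc i)"
  have IH: "(\<Sum>j<h. ?z j) powr (1 + b) \<le> (1 + b) * (\<Sum>j<h. (\<Sum>i=j..<h. ?z i) powr b * ?z j)"
    using Suc by auto
  have e1: "(\<Sum>j<Suc h. y j) = y 0 + (\<Sum>j<h. ?z j)" by (rule sum.lessThan_Suc_shift)
  have e2: "(\<Sum>j<Suc h. (\<Sum>i=j..<Suc h. y i) powr b * y j)
     = (\<Sum>i=0..<Suc h. y i) powr b * y 0 + (\<Sum>j<h. (\<Sum>i=j..<h. ?z i) powr b * ?z j)"
    by (subst sum.lessThan_Suc_shift) (simp only: sum.shift_bounds_Suc_ivl)
  have e3: "(\<Sum>i=0..<Suc h. y i) = y 0 + (\<Sum>j<h. ?z j)"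
    unfolding atLeast0LessThan by (rule e1)
  have nn: "(\<Sum>j<h. ?z j) \<ge> 0" "y 0 \<ge> 0" using Suc.prems by (auto intro: sum_nonneg)
  have "(\<Sum>j<Suc h. y j) powr (1 + b) \<le> (\<Sum>j<h. ?z j) powr (1 + b) + (1 + b) * (y 0 + (\<Sum>j<h. ?z j)) powr b * y 0"
    unfolding e1 using key_ineq[OF assms nn(1) nn(2)] by (simp only: add.commute)
  also have "\<dots> \<le> (1 + b) * (\<Sum>j<Suc h. (\<Sum>i=j..<Suc h. y i) powr b * y j)"
    unfolding e2 e3 distrib_left using IH by (simp only: mult.assoc)
  finally show ?case .
qed

lemma main_analytic:
  fixes x y :: "nat \<Rightarrow> real" and b c :: real
  assumes b: "b > 0" and c: "c > 0" and xh: "x h = 0"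
    and y0: "\<And>j. j < h \<Longrightarrow> y j \<ge> 0"
    and yx: "\<And>j. j < h \<Longrightarrow> y j \<le> x j - x (Suc j)"
    and yc: "\<And>j. j < h \<Longrightarrow> y j \<le> c * x j powr (1 - b)"
  shows "(\<Sum>j<h. y j) powr (1 + b) \<le> (1 + b) * c * (\<Sum>j<h. x j)"
proof -
  have tail: "(\<Sum>i=j..<h. y i) \<le> x j" if "j \<le> h" for j
  proof -
    have "(\<Sum>i=j..<h. y i) \<le> (\<Sum>i=j..<h. x i - x (Suc i))" using yx by (intro sum_mono) auto
    also have "\<dots> = x j - x h" using sum_Suc_diff'[OF that, of x] by (simp add: sum_negf[symmetric] sum_subtractf)
    finally show ?thesis using xh by simp
  qed
  have trm: "(\<Sum>i=j..<h. y i) powr b * y j \<le> c * x j" if "j < h" for j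
  proof -
    have t0: "(\<Sum>i=j..<h. y i) \<ge> 0" using y0 by (intro sum_nonneg) auto
    have xj: "x j \<ge> 0" using tail[of j] t0 that by simp
    have "(\<Sum>i=j..<h. y i) powr b * y j \<le> x j powr b * y j"
      using tail[of j] that t0 y0[OF that] b by (intro mult_right_mono powr_mono2) auto
    also have "\<dots> \<le> c * x j"
    proof (cases "x j = 0")
      case True thus ?thesis using yc[OF that] b by simp
    next
      case False
      have "x j powr b * y j \<le> x j powr b * (c * x j powr (1 - b))"
        using yc[OF that] by (intro mult_left_mono) auto
      also have "\<dots> = c * x j" using False xj by (simp add: powr_add[symmetric])
      finally show ?thesis .
    qed
    finally show ?thesis .
  qed
  have "(\<Sum>j<h. y j) powr (1 + b) \<le> (1 + b) * (\<Sum>j<h. (\<Sum>i=j..<h. y i) powr b * y j)"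
    using tail_ineq[OF b] y0 by auto
  also have "\<dots> \<le> (1 + b) * (\<Sum>j<h. c * x j)"
    using b trm by (intro mult_left_mono sum_mono) auto
  finally show ?thesis by (simp add: sum_distrib_left mult.assoc)
qed


lemma A_conv:
  fixes y x D F :: real and d :: nat
  assumes d: "d \<ge> 1" and y: "y \<ge> 0" and x: "x \<ge> 0" and D: "D \<ge> 0" and F: "F > 0"
    and h: "y^d * F \<le> D * x^(d-1)" and x0: "x = 0 \<Longrightarrow> y = 0"
  shows "y \<le> (D/F) powr (1/d) * x powr (1 - 1/d)"
proof (cases "y = 0")
  case True thus ?thesis by simp
next
  case False
  hence yp: "y > 0" using y by simp
  hence xp: "x > 0" using x x0 by force
  have "y = (y^d) powr (1/d)" using yp d by (simp add: powr_realpow[symmetric] powr_powr)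
  also have "\<dots> \<le> (D/F * x^(d-1)) powr (1/d)"
    using h F yp by (intro powr_mono2) (auto simp: field_simps)
  also have "\<dots> = (D/F) powr (1/d) * (x^(d-1)) powr (1/d)"
    using D F xp by (intro powr_mult; simp)
  also have "(x^(d-1)) powr (1/d) = x powr (1 - 1/d)"
    using xp d by (simp add: powr_realpow[symmetric] powr_powr of_nat_diff field_simps)
  finally show ?thesis .
qed

lemma B_conv:
  fixes m K n :: real and d :: nat
  assumes d: "d \<ge> 1" and m: "m \<ge> 0" and K: "K \<ge> 0" and n: "n \<ge> 0"
    and h: "m powr (1 + 1/d) \<le> K * n"
  shows "m^(d+1) \<le> K^d * n^d"
proof (cases "m = 0")
  case True thus ?thesis using d K n by simp
next
  case False
  hence mp: "m > 0" using m by simp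
  have "m^(d+1) = (m powr (1 + 1/d))^d"
  proof -
    have "(m powr (1 + 1/d))^d = (m powr (1 + 1/d)) powr d" using mp by (simp add: powr_realpow)
    also have "\<dots> = m powr (real (d+1))"
    proof -
      have "(1 + 1/real d) * real d = real (d+1)" using d by (simp add: field_simps)
      thus ?thesis by (simp add: powr_powr)
    qed
    also have "\<dots> = m^(d+1)" using mp by (rule powr_realpow)
    finally show ?thesis by simp
  qed
  also have "\<dots> \<le> (K * n)^d" using h by (intro power_mono) auto
  finally show ?thesis by (simp add: power_mult_distrib)
qed

lemma exp_bound: "real d ^ d / fact d \<le> exp 1 ^ d"
proof (induction d)
  case 0 thus ?case by simp
next
  case (Suc d)
  have key: "real (Suc d) ^ d \<le> exp 1 * real d ^ d"
  proof (cases "d = 0")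
    case True thus ?thesis by simp
  next
    case False
    hence dp: "real d > 0" by simp
    have "real (Suc d) ^ d = real d ^ d * (1 + 1/real d)^d"
      using dp by (simp add: power_mult_distrib[symmetric] field_simps)
    also have "(1 + 1/real d)^d \<le> exp (1/real d) ^ d"
      using dp by (intro power_mono) (auto intro: add_nonneg_nonneg)
    also have "exp (1/real d) ^ d = exp 1"
      using dp by (simp add: exp_of_nat_mult[symmetric])
    finally show ?thesis using dp by (simp add: mult.commute)
  qed
  have "real (Suc d) ^ Suc d / fact (Suc d) = real (Suc d) ^ d / fact d"
  proof -
    have "real (Suc d) ^ Suc d = real (Suc d) * real (Suc d) ^ d" by (rule power_Suc)
    moreover have "(fact (Suc d) :: real) = real (Suc d) * fact d" by (rule fact_Suc)
    ultimately show ?thesis by (simp del: of_nat_Suc)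
  qed
  also have "\<dots> \<le> exp 1 * (real d ^ d / fact d)"
    using key by (simp add: divide_right_mono)
  also have "\<dots> \<le> exp 1 * exp 1 ^ d" using Suc by (intro mult_left_mono) auto
  finally show ?case by simp
qed

lemma prod_ge: "n \<ge> 3 \<Longrightarrow> (\<Prod>k=1..n. 1 + 1 / (real k)^2) \<ge> 25/9"
proof (induction n rule: nat_induct_at_least)
  case base
  have "{1..3::nat} = {1,2,3}" by auto
  thus ?case by simp
next
  case (Suc n)
  have "(\<Prod>k=1..Suc n. 1 + 1 / (real k)^2) = (\<Prod>k=1..n. 1 + 1 / (real k)^2) * (1 + 1/(real (Suc n))^2)"
    by (simp add: prod.nat_ivl_Suc')
  also have "\<dots> \<ge> (\<Prod>k=1..n. 1 + 1 / (real k)^2)"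
  proof -
    have f1: "1 \<le> (1 + 1/(real (Suc n))^2)" by simp
    have P0: "0 \<le> (\<Prod>k=1..n. 1 + 1 / (real k)^2)" using Suc by linarith
    from mult_left_mono[OF f1 P0] show ?thesis by simp
  qed
  finally show ?case using Suc.IH by linarith
qed

lemma const_bound:
  assumes d: "d \<ge> 2"
  shows "(real d ^ d / fact d) powr (1 / real d) \<le> (\<Prod>k=1..d-1. 1 + 1 / (real k)^2)"
proof -
  let ?C = "(\<Prod>k=1..d-1. 1 + 1 / (real k)^2)"
  have Cp: "?C > 0" by (intro prod_pos) (auto simp: add_pos_nonneg)
  have main: "real d ^ d / fact d \<le> ?C ^ d"
  proof -
    consider "d = 2" | "d = 3" | "d \<ge> 4" using d by linarith
    thus ?thesis
    proof cases
      case 1 thus ?thesis by (simp add: fact_numeral)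
    next
      case 2
      have "{1..2::nat} = {1,2}" by auto
      thus ?thesis using 2 by (simp add: fact_numeral power3_eq_cube)
    next
      case 3
      have "real d ^ d / fact d \<le> exp 1 ^ d" by (rule exp_bound)
      also have "\<dots> \<le> ?C ^ d"
      proof (intro power_mono)
        have "exp 1 \<le> (272/100::real)" using e_less_272 by simp
        also have "\<dots> \<le> 25/9" by simp
        also have "\<dots> \<le> ?C" using 3 by (intro prod_ge) auto
        finally show "exp 1 \<le> ?C" .
      qed auto
      finally show ?thesis .
    qed
  qed
  have "(real d ^ d / fact d) powr (1 / real d) \<le> (?C ^ d) powr (1 / real d)"
    using main by (intro powr_mono2) auto
  also have "\<dots> = ?C"
  proof -
    have "?C ^ d = ?C powr (real d)" using Cp by (rule powr_realpow[symmetric])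
    moreover have "(?C powr (real d)) powr (1 / real d) = ?C" using Cp d by (simp add: powr_powr)
    ultimately show ?thesis by simp
  qed
  finally show ?thesis .
qed


lemma dom_Cons: "dom (a#q) (b#q') \<longleftrightarrow> b \<le> a \<and> dom q q'"
  by (auto simp: dom_def All_less_Suc2)

lemma dom_refl: "dom q q" by (simp add: dom_def)

definition slice :: "nat list set \<Rightarrow> nat \<Rightarrow> nat list set" where
  "slice Q j = {q. j # q \<in> Q}"

lemma slice_lower: "lower_set (Suc d) Q \<Longrightarrow> lower_set d (slice Q j)"
  unfolding lower_set_def pts_def slice_def
proof (intro conjI ballI impI subsetI CollectI)
  fix q assume "Q \<subseteq> {q. length q = Suc d} \<and> (\<forall>q\<in>Q. \<forall>q'\<in>{q. length q = Suc d}. dom q q' \<longrightarrow> q' \<in> Q)"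
    and "q \<in> {q. j # q \<in> Q}"
  thus "length q = d" by auto
next
  fix q q' assume A: "Q \<subseteq> {q. length q = Suc d} \<and> (\<forall>q\<in>Q. \<forall>q'\<in>{q. length q = Suc d}. dom q q' \<longrightarrow> q' \<in> Q)"
    and B: "q \<in> {q. j # q \<in> Q}" "q' \<in> {q. length q = d}" "dom q q'"
  have "dom (j#q) (j#q')" using B by (simp add: dom_Cons)
  thus "j # q' \<in> Q" using A B by auto
qed

lemma slice_mono: "lower_set (Suc d) Q \<Longrightarrow> slice Q (Suc j) \<subseteq> slice Q j"
  unfolding lower_set_def pts_def slice_def
proof (intro subsetI CollectI)
  fix q assume A: "Q \<subseteq> {q. length q = Suc d} \<and> (\<forall>q\<in>Q. \<forall>q'\<in>{q. length q = Suc d}. dom q q' \<longrightarrow> q' \<in> Q)"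
    and B: "q \<in> {q. Suc j # q \<in> Q}"
  have "dom (Suc j#q) (j#q)" by (simp add: dom_Cons dom_refl)
  thus "j # q \<in> Q" using A B by auto
qed

lemma slice_finite: "finite Q \<Longrightarrow> finite (slice Q j)"
proof -
  assume "finite Q"
  moreover have "slice Q j = Cons j -` Q" by (auto simp: slice_def)
  ultimately show ?thesis by (auto intro: finite_vimageI simp: inj_on_def)
qed

lemma Q_decomp:
  assumes "lower_set (Suc d) Q" "\<forall>q\<in>Q. hd q < h"
  shows "Q = (\<Union>j<h. Cons j ` slice Q j)"
proof
  show "Q \<subseteq> (\<Union>j<h. Cons j ` slice Q j)"
  proof
    fix q assume q: "q \<in> Q"
    hence "length q = Suc d" using assms(1) by (auto simp: lower_set_def pts_def)
    then obtain j q' where e: "q = j # q'" by (cases q) auto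
    thus "q \<in> (\<Union>j<h. Cons j ` slice Q j)" using q assms(2) by (force simp: slice_def)
  qed
qed (auto simp: slice_def)

lemma M_sub:
  assumes L: "lower_set (Suc d) Q" and hb: "\<forall>q\<in>Q. hd q < h"
  shows "Mset Q \<subseteq> (\<Union>j<h. Cons j ` (Mset (slice Q j) - slice Q (Suc j)))"
proof
  fix q assume qM: "q \<in> Mset Q"
  hence q: "q \<in> Q" and nd: "\<And>p. p \<in> Q \<Longrightarrow> p \<noteq> q \<Longrightarrow> \<not> dom p q" by (auto simp: Mset_def)
  hence "length q = Suc d" using L by (auto simp: lower_set_def pts_def)
  then obtain j q' where e: "q = j # q'" by (cases q) auto
  have jh: "j < h" using hb q e by auto
  have s: "q' \<in> slice Q j" using q e by (simp add: slice_def)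
  have m: "q' \<in> Mset (slice Q j)"
    unfolding Mset_def
  proof (intro CollectI conjI s notI)
    assume "\<exists>p\<in>slice Q j - {q'}. dom p q'"
    then obtain p where p: "j # p \<in> Q" "p \<noteq> q'" "dom p q'" by (auto simp: slice_def)
    have "dom (j#p) q" using p e by (simp add: dom_Cons)
    thus False using nd[OF p(1)] p e by auto
  qed
  have n: "q' \<notin> slice Q (Suc j)"
  proof
    assume "q' \<in> slice Q (Suc j)"
    hence "Suc j # q' \<in> Q" by (simp add: slice_def)
    moreover have "dom (Suc j # q') q" using e by (simp add: dom_Cons dom_refl)
    ultimately show False using nd e by auto
  qed
  show "q \<in> (\<Union>j<h. Cons j ` (Mset (slice Q j) - slice Q (Suc j)))" using jh m n e by auto
qed

lemma Mset_sub: "Mset Q \<subseteq> Q" by (auto simp: Mset_def)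

theorem main_bound:
  "d \<ge> 1 \<Longrightarrow> lower_set d Q \<Longrightarrow> finite Q \<Longrightarrow>
    real (card (Mset Q))^d * fact d \<le> real d^d * real (card Q)^(d-1)"
proof (induction d arbitrary: Q rule: nat_induct_at_least)
  case base
  have fin: "finite (Mset Q)" using base(2) Mset_sub finite_subset by blast
  have "card (Mset Q) \<le> Suc 0"
    unfolding card_le_Suc0_iff_eq[OF fin]
  proof (intro ballI)
    fix a1 a2 assume a1: "a1 \<in> Mset Q" and a2: "a2 \<in> Mset Q"
    have l: "length a1 = 1" "length a2 = 1" using a1 a2 base(1) Mset_sub
      by (auto simp: lower_set_def pts_def)
    have inQ: "a1 \<in> Q" "a2 \<in> Q" using a1 a2 Mset_sub by auto
    show "a1 = a2"
    proof (cases "a1!0 \<le> a2!0")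
      case True
      hence "dom a2 a1" using l by (simp add: dom_def)
      thus ?thesis using a1 inQ by (auto simp: Mset_def)
    next
      case False
      hence "dom a1 a2" using l by (simp add: dom_def)
      thus ?thesis using a2 inQ by (auto simp: Mset_def)
    qed
  qed
  thus ?case by simp
next
  case (Suc d)
  note d = Suc.hyps(1)
  note L = Suc.prems(1) and fQ = Suc.prems(2)
  have "finite (hd ` Q)" using fQ by simp
  then obtain h where hb0: "\<forall>n\<in>hd ` Q. n < h" using finite_nat_set_iff_bounded by blast
  hence hb: "\<forall>q\<in>Q. hd q < h" by auto
  define S where "S = slice Q"
  define x where "x = (\<lambda>j. real (card (S j)))"
  define y where "y = (\<lambda>j. real (card (Mset (S j) - S (Suc j))))"
  define c :: real where "c = (real d ^ d / fact d) powr (1 / real d)"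
  have dpos: "real d > 0" using d by simp
  have cpos: "c > 0" unfolding c_def using dpos by simp
  have fS: "finite (S j)" for j unfolding S_def using slice_finite[OF fQ] .
  have LS: "lower_set d (S j)" for j unfolding S_def using slice_lower[OF L] .
  have Sm: "S (Suc j) \<subseteq> S j" for j unfolding S_def using slice_mono[OF L] .
  have Sh: "S h = {}" unfolding S_def slice_def using hb by force
  have xh: "x h = 0" unfolding x_def using Sh by simp
  have y0: "y j \<ge> 0" for j unfolding y_def by simp
  have yx: "y j \<le> x j - x (Suc j)" for j
  proof -
    have "card (Mset (S j) - S (Suc j)) \<le> card (S j - S (Suc j))"
      using fS Mset_sub by (intro card_mono) auto
    also have "\<dots> = card (S j) - card (S (Suc j))" using fS Sm by (intro card_Diff_subset) auto
    finally have "real (card (Mset (S j) - S (Suc j))) \<le> real (card (S j) - card (S (Suc j)))"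
      by (simp only: of_nat_le_iff)
    also have "\<dots> = real (card (S j)) - real (card (S (Suc j)))"
      using card_mono[OF fS[of j] Sm[of j]] by (rule of_nat_diff)
    finally show ?thesis unfolding x_def y_def .
  qed
  have yc: "y j \<le> c * x j powr (1 - 1 / real d)" for j
  proof -
    let ?y' = "real (card (Mset (S j)))"
    have IH: "?y'^d * fact d \<le> real d^d * (x j)^(d-1)"
      unfolding x_def using Suc.IH[OF LS fS] .
    have x0: "x j = 0 \<Longrightarrow> ?y' = 0"
    proof -
      assume "x j = 0"
      hence "S j = {}" unfolding x_def using fS by simp
      thus "?y' = 0" using Mset_sub[of "S j"] by auto
    qed
    have "?y' \<le> (real d ^ d / fact d) powr (1/d) * x j powr (1 - 1/d)"
      using A_conv[OF d _ _ _ _ IH x0] unfolding x_def by simp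
    moreover have "y j \<le> ?y'" unfolding y_def
      using fS Mset_sub by (intro of_nat_mono card_mono) (auto intro: finite_subset)
    ultimately show ?thesis unfolding c_def by simp
  qed
  have an: "(\<Sum>j<h. y j) powr (1 + 1/real d) \<le> (1 + 1/real d) * c * (\<Sum>j<h. x j)"
    using main_analytic[of "1/real d" c x h y] dpos cpos xh y0 yx yc by auto
  have m_le: "real (card (Mset Q)) \<le> (\<Sum>j<h. y j)"
  proof -
    have "card (Mset Q) \<le> card (\<Union>j<h. Cons j ` (Mset (S j) - S (Suc j)))"
    proof (rule card_mono)
      have fM: "finite (Mset (S j) - S (Suc j))" for j
        using fS[of j] Mset_sub[of "S j"] finite_subset by blast
      thus "finite (\<Union>j<h. Cons j ` (Mset (S j) - S (Suc j)))" by simp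
      show "Mset Q \<subseteq> (\<Union>j<h. Cons j ` (Mset (S j) - S (Suc j)))"
        using M_sub[OF L hb] unfolding S_def .
    qed
    also have "\<dots> \<le> (\<Sum>j<h. card (Cons j ` (Mset (S j) - S (Suc j))))" by (rule card_UN_le) simp
    also have "\<dots> \<le> (\<Sum>j<h. card (Mset (S j) - S (Suc j)))" by (intro sum_mono card_image_le) (use fS Mset_sub in \<open>auto intro: finite_subset\<close>)
    finally show ?thesis unfolding y_def by (simp flip: of_nat_sum)
  qed
  have n_eq: "real (card Q) = (\<Sum>j<h. x j)"
  proof -
    have "card Q = card (\<Union>j<h. Cons j ` S j)" using Q_decomp[OF L hb] unfolding S_def by simp
    also have "\<dots> = (\<Sum>j<h. card (Cons j ` S j))"
      using fS by (intro card_UN_disjoint) auto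
    also have "\<dots> = (\<Sum>j<h. card (S j))" by (intro sum.cong refl card_image) auto
    finally show ?thesis unfolding x_def by simp
  qed
  let ?m = "real (card (Mset Q))" and ?n = "real (card Q)"
  have "?m powr (1 + 1/real d) \<le> (\<Sum>j<h. y j) powr (1 + 1/real d)"
    using m_le by (intro powr_mono2) auto
  also have "\<dots> \<le> ((1 + 1/real d) * c) * ?n" using an n_eq by simp
  finally have "?m ^ (d+1) \<le> ((1 + 1/real d) * c)^d * ?n^d"
    using cpos dpos by (intro B_conv[OF d]) auto
  also have "((1 + 1/real d) * c)^d = real (Suc d)^d / fact d"
  proof -
    have "c ^ d = real d ^ d / fact d"
    proof -
      have "c ^ d = c powr (real d)" using cpos by (rule powr_realpow[symmetric])
      also have "\<dots> = real d ^ d / fact d" unfolding c_def using dpos by (simp add: powr_powr)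
      finally show ?thesis .
    qed
    moreover have "(1 + 1/real d)^d * real d ^ d = real (Suc d)^d"
      using dpos by (simp add: power_mult_distrib[symmetric] field_simps)
    ultimately show ?thesis by (simp add: power_mult_distrib)
  qed
  finally have *: "?m ^ (d+1) \<le> real (Suc d)^d / fact d * ?n^d" .
  have "?m ^ Suc d * fact (Suc d) \<le> real (Suc d)^d / fact d * ?n^d * fact (Suc d)"
    using * by (intro mult_right_mono) auto
  also have "\<dots> = real (Suc d)^(Suc d) * ?n^d"
    by (simp add: fact_Suc del: of_nat_Suc) 
  finally show ?case by simp
qed

theorem lemma1:
  fixes d n :: nat and Q :: "nat list set"
  assumes "d \<ge> 2"
    and "real n \<ge> real d powr (6 * real d * ln (real d))"
    and "lower_set d Q" and "finite Q" and "card Q = n"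
  shows "real (card (Mset Q)) \<le> (\<Prod>k=1..d-1. 1 + 1 / (real k)^2) * real n powr (1 - 1 / real d)
     \<and> (\<Prod>k=1..d-1. 1 + 1 / (real k)^2) * real n powr (1 - 1 / real d)
         < sinh pi / pi * real n powr (1 - 1 / real d)"
proof
  let ?C = "(\<Prod>k=1..d-1. 1 + 1 / (real k)^2)"
  have d1: "d \<ge> 1" using assms(1) by simp
  have npos: "real n > 0"
  proof -
    have "real d powr (6 * real d * ln (real d)) > 0" using d1 by simp
    thus ?thesis using assms(2) by linarith
  qed
  have mb: "real (card (Mset Q))^d * fact d \<le> real d^d * real n^(d-1)"
    using main_bound[OF d1 assms(3,4)] assms(5) by simp
  have "real (card (Mset Q)) \<le> (real d ^ d / fact d) powr (1 / real d) * real n powr (1 - 1 / real d)"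
    using A_conv[OF d1 _ _ _ _ mb] npos by simp
  also have "\<dots> \<le> ?C * real n powr (1 - 1 / real d)"
    using const_bound[OF assms(1)] by (intro mult_right_mono) auto
  finally show "real (card (Mset Q)) \<le> ?C * real n powr (1 - 1 / real d)" .
  show "?C * real n powr (1 - 1 / real d) < sinh pi / pi * real n powr (1 - 1 / real d)"
    using prod_lt[of "d-1"] npos by (intro mult_strict_right_mono) auto
qed

end
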